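(* Let $G$ be a graph with vertices $a,b,c,\alpha,\beta,\gamma$. Suppose there is perfect state transfer between $e_a-e_b$ and $e_\alpha-e_\beta$ at time $\tau$ in $G$, and there is also perfect state transfer between $e_b-e_c$ and $e_\beta-e_\gamma$ at the same time $\tau$ in $G$. Then there is perfect state transfer between $e_a-e_c$ and $e_\alpha-e_\gamma$ at time $\tau$ in $G$.
   Context: For a graph $G$ with Laplacian $L=\Delta-A$ ($\Delta$ degree matrix, $A$ adjacency matrix), $U(t)=\exp(itL)$. Perfect state transfer between $e_x-e_y$ and $e_z-e_w$ at time $\tau$ means $U(\tau)(e_x-e_y)=\lambda(e_z-e_w)$ for some $\lambda\in\mathbb{C}$ with $|\lambda|=1$; here $e_v$ is the standard basis vector of vertex $v$. *)

theory Defs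
  imports "HOL-Analysis.Analysis"
begin

definition simple_graph :: "('n::finite \<Rightarrow> 'n \<Rightarrow> bool) \<Rightarrow> bool" where
  "simple_graph E \<longleftrightarrow> (\<forall>x y. E x y \<longrightarrow> E y x) \<and> (\<forall>x. \<not> E x x)"

definition adjacency_matrix :: "('n::finite \<Rightarrow> 'n \<Rightarrow> bool) \<Rightarrow> complex^'n^'n" where
  "adjacency_matrix E = (\<chi> i j. if E i j then 1 else 0)"

definition degree_matrix :: "('n::finite \<Rightarrow> 'n \<Rightarrow> bool) \<Rightarrow> complex^'n^'n" where
  "degree_matrix E = (\<chi> i j. if i = j then of_nat (card {k. E i k}) else 0)"

definition laplacian :: "('n::finite \<Rightarrow> 'n \<Rightarrow> bool) \<Rightarrow> complex^'n^'n" where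
  "laplacian E = degree_matrix E - adjacency_matrix E"

definition matpow :: "complex^'n^'n \<Rightarrow> nat \<Rightarrow> complex^'n^'n" where
  "matpow A k = ((\<lambda>M. A ** M) ^^ k) (mat 1)"

definition mat_exp :: "complex^'n^'n \<Rightarrow> complex^'n^'n" where
  "mat_exp A = (\<Sum>k. scaleR (1 / fact k :: real) (matpow A k))"

definition cmat_scale :: "complex \<Rightarrow> complex^'n^'m \<Rightarrow> complex^'n^'m" where
  "cmat_scale c A = (\<chi> i j. c * A $ i $ j)"

definition transition :: "('n::finite \<Rightarrow> 'n \<Rightarrow> bool) \<Rightarrow> real \<Rightarrow> complex^'n^'n" where
  "transition E t = mat_exp (cmat_scale (\<i> * complex_of_real t) (laplacian E))"

definition basis_vec :: "'n::finite \<Rightarrow> complex^'n" where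
  "basis_vec v = axis v 1"

definition pair_pst :: "('n::finite \<Rightarrow> 'n \<Rightarrow> bool) \<Rightarrow> 'n \<Rightarrow> 'n \<Rightarrow> 'n \<Rightarrow> 'n \<Rightarrow> real \<Rightarrow> bool" where
  "pair_pst E x y z w tau \<longleftrightarrow>
     (\<exists>lam::complex. cmod lam = 1 \<and>
        transition E tau *v (basis_vec x - basis_vec y) = lam *s (basis_vec z - basis_vec w))"

end

theory Submission
  imports Defs
begin

lemma matpow_0: "matpow A 0 = mat 1" by (simp add: matpow_def)
lemma matpow_Suc: "matpow A (Suc k) = A ** matpow A k" by (simp add: matpow_def)

lemma matpow_add: "matpow A (k + m) = matpow A k ** matpow A m"
  by (induction k) (auto simp: matpow_0 matpow_Suc matrix_mul_assoc)

lemma matpow_Suc': "matpow A (Suc k) = matpow A k ** A"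
  using matpow_add[of A k 1] by (simp add: matpow_Suc matpow_0)

lemma cmat_scale_mult: "cmat_scale a A ** cmat_scale b B = cmat_scale (a*b) (A ** B)"
  by (simp add: vec_eq_iff cmat_scale_def matrix_matrix_mult_def sum_distrib_left mult_ac)

lemma matpow_scale: "matpow (cmat_scale c A) k = cmat_scale (c^k) (matpow A k)"
proof (induction k)
  case 0
  then show ?case by (simp add: matpow_0 cmat_scale_def vec_eq_iff mat_def)
next
  case (Suc k)
  then show ?case by (simp add: matpow_Suc cmat_scale_mult)
qed

lemma lap_sym:
  assumes "simple_graph E"
  shows "laplacian E $ i $ j = laplacian E $ j $ i"
  using assms by (auto simp: laplacian_def degree_matrix_def adjacency_matrix_def simple_graph_def)

lemma lap_real:
  shows "cnj (laplacian E $ i $ j) = laplacian E $ i $ j"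
  by (auto simp: laplacian_def degree_matrix_def adjacency_matrix_def)

lemma pow_real: "cnj (matpow (laplacian E) k $ i $ j) = matpow (laplacian E) k $ i $ j"
proof (induction k arbitrary: i j)
  case 0
  then show ?case by (simp add: matpow_0 mat_def)
next
  case (Suc k)
  then show ?case by (simp add: matpow_Suc matrix_matrix_mult_def lap_real)
qed

lemma pow_sym:
  assumes "simple_graph E"
  shows "matpow (laplacian E) k $ i $ j = matpow (laplacian E) k $ j $ i"
proof (induction k arbitrary: i j)
  case 0
  then show ?case by (simp add: matpow_0 mat_def)
next
  case (Suc k)
  have "matpow (laplacian E) (Suc k) $ i $ j = (\<Sum>l\<in>UNIV. laplacian E $ i $ l * matpow (laplacian E) k $ l $ j)"
    by (simp add: matpow_Suc matrix_matrix_mult_def)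
  also have "\<dots> = (\<Sum>l\<in>UNIV. matpow (laplacian E) k $ j $ l * laplacian E $ l $ i)"
    using Suc lap_sym[OF assms] by (simp add: mult.commute)
  also have "\<dots> = matpow (laplacian E) (Suc k) $ j $ i"
    by (simp add: matpow_Suc' matrix_matrix_mult_def)
  finally show ?case .
qed

lemma pow_bound:
  fixes A :: "complex^'n::finite^'n"
  defines "M \<equiv> (\<Sum>i\<in>UNIV. \<Sum>j\<in>UNIV. cmod (A $ i $ j))"
  shows "cmod (matpow A k $ i $ j) \<le> M ^ k"
proof (induction k arbitrary: i j)
  case 0
  then show ?case by (simp add: matpow_0 mat_def)
next
  case (Suc k)
  have "cmod (matpow A (Suc k) $ i $ j) = cmod (\<Sum>l\<in>UNIV. A $ i $ l * matpow A k $ l $ j)"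
    by (simp add: matpow_Suc matrix_matrix_mult_def)
  also have "\<dots> \<le> (\<Sum>l\<in>UNIV. cmod (A $ i $ l * matpow A k $ l $ j))"
    by (rule norm_sum)
  also have "\<dots> \<le> (\<Sum>l\<in>UNIV. cmod (A $ i $ l) * M ^ k)"
    by (rule sum_mono) (simp add: norm_mult Suc mult_left_mono)
  also have "\<dots> = (\<Sum>l\<in>UNIV. cmod (A $ i $ l)) * M ^ k"
    by (simp add: sum_distrib_right)
  also have "\<dots> \<le> M * M ^ k"
  proof (rule mult_right_mono)
    show "(\<Sum>l\<in>UNIV. cmod (A $ i $ l)) \<le> M"
      unfolding M_def by (rule member_le_sum) (auto intro: sum_nonneg)
    show "0 \<le> M ^ k" unfolding M_def by (intro zero_le_power sum_nonneg) auto
  qed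
  finally show ?case by simp
qed


lemma term_summable:
  fixes A :: "complex^'n::finite^'n"
  shows "summable (\<lambda>k. norm (c^k / fact k * matpow A k $ i $ j))"
proof -
  define M where "M = (\<Sum>i\<in>UNIV. \<Sum>j\<in>UNIV. cmod (A $ i $ j))"
  have s: "summable (\<lambda>k. inverse (fact k) * (cmod c * M) ^ k)"
    by (rule summable_exp)
  show ?thesis
  proof (rule summable_comparison_test'[OF s])
    fix k :: nat
    have "norm (norm (c^k / fact k * matpow A k $ i $ j)) = cmod c ^ k / fact k * cmod (matpow A k $ i $ j)"
      by (simp add: norm_mult norm_divide norm_power)
    also have "\<dots> \<le> cmod c ^ k / fact k * M ^ k"
      by (rule mult_left_mono) (auto simp: M_def pow_bound)
    also have "\<dots> = inverse (fact k) * (cmod c * M) ^ k"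
      by (simp add: power_mult_distrib field_simps)
    finally show "norm (norm (c^k / fact k * matpow A k $ i $ j)) \<le> inverse (fact k) * (cmod c * M) ^ k" .
  qed
qed

lemma mat_exp_entry:
  fixes A :: "complex^'n::finite^'n"
  shows "mat_exp (cmat_scale c A) $ i $ j = (\<Sum>k. c^k / fact k * matpow A k $ i $ j)"
proof -
  define f where "f k = scaleR (1 / fact k :: real) (matpow (cmat_scale c A) k)" for k
  have fe: "f k $ i $ j = c^k / fact k * matpow A k $ i $ j" for k i j
    by (simp only: f_def vector_scaleR_component matpow_scale) (simp add: cmat_scale_def scaleR_conv_of_real)
  have sm: "summable (\<lambda>k. f k $ i $ j)" for i j
    unfolding fe by (rule summable_norm_cancel[OF term_summable])
  have ps: "(\<Sum>k<n. f k) = (\<chi> i j. \<Sum>k<n. f k $ i $ j)" for n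
    by (simp add: vec_eq_iff sum_component)
  have "f sums (\<chi> i j. \<Sum>k. f k $ i $ j)"
    unfolding sums_def ps
    by (intro tendsto_vec_lambda summable_LIMSEQ sm)
  then have "mat_exp (cmat_scale c A) = (\<chi> i j. \<Sum>k. f k $ i $ j)"
    unfolding mat_exp_def f_def[symmetric] by (rule sums_unique[symmetric])
  then show ?thesis by (simp add: fe)
qed


lemma binom_exp:
  fixes a b :: complex
  shows "(\<Sum>k\<le>n. a^k / fact k * (b^(n-k) / fact (n-k))) = (a+b)^n / fact n"
proof -
  have "(a+b)^n / fact n = (\<Sum>k\<le>n. of_nat (n choose k) * a^k * b^(n-k)) / fact n"
    by (simp add: binomial_ring)
  also have "\<dots> = (\<Sum>k\<le>n. of_nat (n choose k) * a^k * b^(n-k) / fact n)"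
    by (simp add: sum_divide_distrib)
  also have "\<dots> = (\<Sum>k\<le>n. a^k / fact k * (b^(n-k) / fact (n-k)))"
  proof (rule sum.cong[OF refl])
    fix k assume "k \<in> {..n}"
    then have "k \<le> n" by simp
    then have "(of_nat (n choose k) :: complex) = fact n / (fact k * fact (n - k))"
      by (rule binomial_fact)
    then show "of_nat (n choose k) * a^k * b^(n-k) / fact n = a^k / fact k * (b^(n-k) / fact (n-k))"
      by (simp add: field_simps)
  qed
  finally show ?thesis by simp
qed

lemma unitary:
  assumes "simple_graph E"
  shows "(\<Sum>j\<in>UNIV. cnj (transition E t $ j $ x) * transition E t $ j $ y) = (if x = y then 1 else 0)"
proof -
  define c where "c = \<i> * complex_of_real t"
  define P where "P = matpow (laplacian E)"
  define U where "U = transition E t"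
  have cc: "cnj c + c = 0" by (simp add: c_def)
  have Ue: "U $ i $ j = (\<Sum>k. c^k / fact k * P k $ i $ j)" for i j
    by (simp add: U_def transition_def mat_exp_entry c_def P_def)
  have Us: "(\<lambda>k. c^k / fact k * P k $ i $ j) sums U $ i $ j" for i j
    unfolding Ue by (rule summable_sums, rule summable_norm_cancel, unfold P_def, rule term_summable)
  have cP: "cnj (P k $ j $ x) = P k $ x $ j" for k j x
    unfolding P_def using pow_real pow_sym[OF assms] by metis
  have prod: "(\<lambda>n. \<Sum>k\<le>n. (cnj c ^ k / fact k * P k $ x $ j) * (c^(n-k) / fact (n-k) * P (n-k) $ j $ y))
      sums (cnj (U $ j $ x) * U $ j $ y)" for j
  proof -
    have A: "(\<lambda>k. cnj c ^ k / fact k * P k $ x $ j) sums cnj (U $ j $ x)"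
    proof -
      have "(\<lambda>k. cnj (c^k / fact k * P k $ j $ x)) sums cnj (U $ j $ x)"
        using Us[of j x] by (simp only: sums_cnj)
      then show ?thesis by (simp add: cP)
    qed
    have nA: "summable (\<lambda>k. norm (cnj c ^ k / fact k * P k $ x $ j))"
    proof -
      have "summable (\<lambda>k. norm (c^k / fact k * P k $ j $ x))"
        unfolding P_def by (rule term_summable)
      moreover have "norm (cnj c ^ k / fact k * P k $ x $ j) = norm (c^k / fact k * P k $ j $ x)" for k
        proof -
          have "cnj c ^ k / fact k * P k $ x $ j = cnj (c^k / fact k * P k $ j $ x)" by (simp add: cP)
          then show ?thesis by (simp only: complex_mod_cnj)
        qed
      ultimately show ?thesis by simp
    qed
    have nB: "summable (\<lambda>k. norm (c^k / fact k * P k $ j $ y))"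
      unfolding P_def by (rule term_summable)
    have "(\<lambda>n. \<Sum>k\<le>n. (cnj c ^ k / fact k * P k $ x $ j) * (c^(n-k) / fact (n-k) * P (n-k) $ j $ y))
      sums ((\<Sum>k. cnj c ^ k / fact k * P k $ x $ j) * (\<Sum>k. c^k / fact k * P k $ j $ y))"
      by (rule Cauchy_product_sums[OF nA nB])
    moreover have "(\<Sum>k. cnj c ^ k / fact k * P k $ x $ j) = cnj (U $ j $ x)"
      using A sums_unique by metis
    moreover have "(\<Sum>k. c^k / fact k * P k $ j $ y) = U $ j $ y"
      using Us sums_unique by metis
    ultimately show ?thesis by simp
  qed
  have S: "(\<lambda>n. \<Sum>j\<in>UNIV. \<Sum>k\<le>n. (cnj c ^ k / fact k * P k $ x $ j) * (c^(n-k) / fact (n-k) * P (n-k) $ j $ y))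
      sums (\<Sum>j\<in>UNIV. cnj (U $ j $ x) * U $ j $ y)"
    by (rule sums_sum) (rule prod)
  have T: "(\<Sum>j\<in>UNIV. \<Sum>k\<le>n. (cnj c ^ k / fact k * P k $ x $ j) * (c^(n-k) / fact (n-k) * P (n-k) $ j $ y))
      = (if n = 0 then P 0 $ x $ y else 0)" for n
  proof -
    have "(\<Sum>j\<in>UNIV. \<Sum>k\<le>n. (cnj c ^ k / fact k * P k $ x $ j) * (c^(n-k) / fact (n-k) * P (n-k) $ j $ y))
      = (\<Sum>k\<le>n. cnj c ^ k / fact k * (c^(n-k) / fact (n-k)) * (\<Sum>j\<in>UNIV. P k $ x $ j * P (n-k) $ j $ y))"
      by (subst sum.swap) (simp add: sum_distrib_left sum_divide_distrib mult_ac)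
    also have "\<dots> = (\<Sum>k\<le>n. cnj c ^ k / fact k * (c^(n-k) / fact (n-k)) * P n $ x $ y)"
    proof (rule sum.cong[OF refl])
      fix k assume "k \<in> {..n}"
      then have "P n = P k ** P (n-k)" unfolding P_def by (simp add: matpow_add[symmetric])
      then show "cnj c ^ k / fact k * (c^(n-k) / fact (n-k)) * (\<Sum>j\<in>UNIV. P k $ x $ j * P (n-k) $ j $ y)
          = cnj c ^ k / fact k * (c^(n-k) / fact (n-k)) * P n $ x $ y"
        by (simp add: matrix_matrix_mult_def)
    qed
    also have "\<dots> = (cnj c + c)^n / fact n * P n $ x $ y"
      by (simp only: sum_distrib_right[symmetric] binom_exp)
    also have "\<dots> = (if n = 0 then P 0 $ x $ y else 0)"
      by (simp add: cc)
    finally show ?thesis .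
  qed
  have "(\<lambda>n. if n = 0 then P 0 $ x $ y else 0) sums (\<Sum>j\<in>UNIV. cnj (U $ j $ x) * U $ j $ y)"
    using S unfolding T .
  moreover have "(\<lambda>n. if n = 0 then P 0 $ x $ y else 0) sums (P 0 $ x $ y)"
    using sums_single[of 0 "\<lambda>_. P 0 $ x $ y"] by simp
  ultimately have "(\<Sum>j\<in>UNIV. cnj (U $ j $ x) * U $ j $ y) = P 0 $ x $ y"
    using sums_unique2 by blast
  then show ?thesis by (simp add: U_def P_def matpow_0 mat_def)
qed


definition Q :: "complex^'n::finite \<Rightarrow> real" where
  "Q v = (\<Sum>j\<in>UNIV. cmod (v $ j) ^ 2)"

lemma Qc: "complex_of_real (Q v) = (\<Sum>j\<in>UNIV. cnj (v $ j) * v $ j)"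
  unfolding Q_def of_real_sum
  by (rule sum.cong[OF refl]) (metis complex_norm_square mult.commute)

lemma Q_pres:
  assumes "simple_graph E"
  shows "Q (transition E t *v v) = Q v"
proof -
  define U where "U = transition E t"
  have "complex_of_real (Q (U *v v)) = (\<Sum>j\<in>UNIV. \<Sum>x\<in>UNIV. \<Sum>y\<in>UNIV. cnj (U $ j $ x) * cnj (v $ x) * (U $ j $ y * v $ y))"
    by (simp add: Qc matrix_vector_mult_def cnj_sum sum_product)
  also have "\<dots> = (\<Sum>x\<in>UNIV. \<Sum>y\<in>UNIV. cnj (v $ x) * v $ y * (\<Sum>j\<in>UNIV. cnj (U $ j $ x) * U $ j $ y))"
  proof -
    have "(\<Sum>j\<in>UNIV. \<Sum>x\<in>UNIV. \<Sum>y\<in>UNIV. cnj (U $ j $ x) * cnj (v $ x) * (U $ j $ y * v $ y))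
      = (\<Sum>x\<in>UNIV. \<Sum>y\<in>UNIV. \<Sum>j\<in>UNIV. cnj (U $ j $ x) * cnj (v $ x) * (U $ j $ y * v $ y))"
      by (rule trans[OF sum.swap], rule sum.cong[OF refl], rule sum.swap)
    also have "\<dots> = (\<Sum>x\<in>UNIV. \<Sum>y\<in>UNIV. cnj (v $ x) * v $ y * (\<Sum>j\<in>UNIV. cnj (U $ j $ x) * U $ j $ y))"
      by (simp add: sum_distrib_left mult_ac)
    finally show ?thesis .
  qed
  also have "\<dots> = (\<Sum>x\<in>UNIV. \<Sum>y\<in>UNIV. cnj (v $ x) * v $ y * (if x = y then 1 else 0))"
    unfolding U_def using unitary[OF assms] by simp
  also have "\<dots> = (\<Sum>x\<in>UNIV. \<Sum>y\<in>UNIV. if x = y then cnj (v $ x) * v $ y else 0)"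
    by (rule sum.cong[OF refl], rule sum.cong[OF refl]) simp
  also have "\<dots> = complex_of_real (Q v)"
    by (simp add: Qc)
  finally show ?thesis unfolding U_def by (simp only: of_real_eq_iff)
qed

lemma bv: "basis_vec v $ j = (if j = v then 1 else 0)"
  by (simp add: basis_vec_def axis_def)

lemma Q_ge3:
  assumes "p \<noteq> q" "p \<noteq> r" "q \<noteq> r"
  shows "cmod (v $ p) ^ 2 + cmod (v $ q) ^ 2 + cmod (v $ r) ^ 2 \<le> Q v"
proof -
  have "(\<Sum>j\<in>{p,q,r}. cmod (v $ j) ^ 2) \<le> (\<Sum>j\<in>UNIV. cmod (v $ j) ^ 2)"
    by (rule sum_mono2) auto
  then show ?thesis using assms by (simp add: Q_def)
qed

lemma Q_ge1: "cmod (v $ p) ^ 2 \<le> Q v"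
proof -
  have "(\<Sum>j\<in>{p}. cmod (v $ j) ^ 2) \<le> (\<Sum>j\<in>UNIV. cmod (v $ j) ^ 2)"
    by (rule sum_mono2) auto
  then show ?thesis by (simp add: Q_def)
qed

lemma Q_le2: "Q (basis_vec a - basis_vec c) \<le> 2"
proof -
  have "Q (basis_vec a - basis_vec c) \<le> (\<Sum>j\<in>UNIV. (if j = a then 1 else 0) + (if j = c then 1 else 0))"
    unfolding Q_def by (rule sum_mono) (auto simp: bv)
  also have "\<dots> = 2" by (simp add: sum.distrib)
  finally show ?thesis .
qed

lemma mv_lin: "A *v (x - y) = A *v x - A *v y" "A *v (x + y) = A *v x + A *v y"
  "A *v (k *s x) = k *s (A *v x)" for A :: "complex^'n::finite^'n"
  by (simp_all add: vec_eq_iff matrix_vector_mult_def sum_distrib_left mult_ac sum_subtractf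
      algebra_simps sum.distrib)

theorem mainTheorem4:
  fixes E :: "'n::finite \<Rightarrow> 'n \<Rightarrow> bool"
    and a b c \<alpha> \<beta> \<gamma> :: 'n
    and \<tau> :: real
  assumes "simple_graph E"
    and "pair_pst E a b \<alpha> \<beta> \<tau>"
    and "pair_pst E b c \<beta> \<gamma> \<tau>"
  shows "pair_pst E a c \<alpha> \<gamma> \<tau>"
proof -
  define U where "U = transition E \<tau>"
  define e where "e = (basis_vec :: 'n \<Rightarrow> complex^'n)"
  obtain l1 where l1: "cmod l1 = 1" "U *v (e a - e b) = l1 *s (e \<alpha> - e \<beta>)"
    using assms(2) unfolding pair_pst_def U_def e_def by blast
  obtain l2 where l2: "cmod l2 = 1" "U *v (e b - e c) = l2 *s (e \<beta> - e \<gamma>)"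
    using assms(3) unfolding pair_pst_def U_def e_def by blast
  have l1nz: "l1 \<noteq> 0" using l1 by auto
  have l2nz: "l2 \<noteq> 0" using l2 by auto
  have w: "U *v (e a - e c) = l1 *s (e \<alpha> - e \<beta>) + l2 *s (e \<beta> - e \<gamma>)"
  proof -
    have "e a - e c = (e a - e b) + (e b - e c)" by simp
    then show ?thesis using l1 l2 by (simp only: mv_lin)
  qed
  have ev: "e v $ j = (if j = v then 1 else 0)" for v j by (simp add: e_def bv)
  have goal: "\<exists>lam. cmod lam = 1 \<and> U *v (e a - e c) = lam *s (e \<alpha> - e \<gamma>)"
  proof (cases "\<alpha> = \<beta>")
    case True
    then show ?thesis using w l2 by (intro exI[of _ l2]) simp
  next
    case nab: False
    show ?thesis
    proof (cases "\<beta> = \<gamma>")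
      case True
      then show ?thesis using w l1 by (intro exI[of _ l1]) simp
    next
      case nbc: False
      show ?thesis
      proof (cases "\<alpha> = \<gamma>")
        case True
        show ?thesis
        proof (cases "a = c")
          case True
          then show ?thesis by (intro exI[of _ 1]) (simp add: \<open>\<alpha> = \<gamma>\<close> mv_lin)
        next
          case nac: False
          have zero: "U *v 0 = 0" by (simp add: vec_eq_iff matrix_vector_mult_def)
          have nab': "a \<noteq> b"
          proof
            assume "a = b"
            then have "l1 *s (e \<alpha> - e \<beta>) = 0" using l1(2) zero by simp
            then have "(l1 *s (e \<alpha> - e \<beta>)) $ \<alpha> = (0::complex^'n) $ \<alpha>" by (rule arg_cong)
            then have "l1 * (e \<alpha> $ \<alpha> - e \<beta> $ \<alpha>) = 0"
              by (simp only: vector_smult_component vector_minus_component zero_index)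
            then show False using nab l1nz by (simp add: ev)
          qed
          have nbc': "b \<noteq> c"
          proof
            assume "b = c"
            then have "l2 *s (e \<beta> - e \<gamma>) = 0" using l2(2) zero by simp
            then have "(l2 *s (e \<beta> - e \<gamma>)) $ \<beta> = (0::complex^'n) $ \<beta>" by (rule arg_cong)
            then have "l2 * (e \<beta> $ \<beta> - e \<gamma> $ \<beta>) = 0"
              by (simp only: vector_smult_component vector_minus_component zero_index)
            then show False using nbc l2nz by (simp add: ev)
          qed
          define k where "k = (l1 - l2) / l1"
          define u where "u = (e a - e c) - k *s (e a - e b)"
          have "U *v u = l1 *s (e \<alpha> - e \<beta>) + l2 *s (e \<beta> - e \<gamma>) - k *s (l1 *s (e \<alpha> - e \<beta>))"
          proof -
            have "U *v u = U *v (e a - e c) - U *v (k *s (e a - e b))"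
              unfolding u_def by (rule mv_lin(1))
            also have "\<dots> = U *v (e a - e c) - k *s (U *v (e a - e b))"
              by (simp only: mv_lin(3))
            finally show ?thesis by (simp only: w l1(2))
          qed
          also have "\<dots> = 0"
            using True l1nz by (simp add: vec_eq_iff ev k_def field_simps)
          finally have "Q (U *v u) = 0" by (simp add: Q_def)
          moreover have "Q (U *v u) = Q u" unfolding U_def by (rule Q_pres[OF assms(1)])
          moreover have "cmod (u $ c) ^ 2 \<le> Q u" by (rule Q_ge1)
          moreover have "u $ c = -1" using nac nbc' by (simp add: u_def ev)
          ultimately show ?thesis by simp
        qed
      next
        case nag: False
        have "cmod ((U *v (e a - e c)) $ \<alpha>) ^ 2 + cmod ((U *v (e a - e c)) $ \<beta>) ^ 2
              + cmod ((U *v (e a - e c)) $ \<gamma>) ^ 2 \<le> Q (U *v (e a - e c))"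
          by (rule Q_ge3) (use nab nbc nag in auto)
        also have "\<dots> = Q (e a - e c)" unfolding U_def by (rule Q_pres[OF assms(1)])
        also have "\<dots> \<le> 2" unfolding e_def by (rule Q_le2)
        finally have ineq: "cmod ((U *v (e a - e c)) $ \<alpha>) ^ 2 + cmod ((U *v (e a - e c)) $ \<beta>) ^ 2
              + cmod ((U *v (e a - e c)) $ \<gamma>) ^ 2 \<le> 2" .
        have "(U *v (e a - e c)) $ \<alpha> = l1" "(U *v (e a - e c)) $ \<beta> = l2 - l1"
             "(U *v (e a - e c)) $ \<gamma> = - l2"
          using nab nbc nag by (simp_all add: w ev)
        with ineq l1 l2 have "cmod (l2 - l1) ^ 2 \<le> 0" by simp
        then have "l2 = l1" by simp
        then show ?thesis using w l1
          by (intro exI[of _ l1]) (simp add: vec_eq_iff algebra_simps)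
      qed
    qed
  qed
  then show ?thesis unfolding pair_pst_def U_def e_def by simp
qed

end
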